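(* Let $n\in\{2,6,10,\dots\}$ and consider $f_{n+4}$ on $\{0,1\}^{n+4}$. (a) If $x_{n+2}=x_{n+3}=x_{n+4}=0$, then changing $x_{n+1}$ from $0$ to $1$ strictly increases $f_{n+4}$ if and only if $x_i=1$ for all $i\le n$. (b) If $x_{n+4}=0$, then changing $x_{n+3}$ from $0$ to $1$ strictly increases $f_{n+4}$ if and only if $x_{n+1}=x_{n+2}=1$ and $x_i=0$ for all $i\le n$. (c) Changing $x_{n+4}$ from $0$ to $1$ strictly increases $f_{n+4}$ if and only if $x_{n+3}=1$.
   Context: For $n\in\{2,6,10,\dots\}$ define polynomials $f_n$ in variables $x_1,\dots,x_n$ (evaluated on $\{0,1\}^n$) recursively. Set $f_2(x_1,x_2):=x_1+x_2$. For $n\in\{2,6,10,\dots\}$, write $\mathbf{x}=(x_1,\dots,x_n)$, $S:=\sum_{i=1}^n x_i$, let $M_n:=\max_{\{0,1\}^n} f_n-\min_{\{0,1\}^n} f_n+1$, and define $f_{n+4}(\mathbf{x},x_{n+1},x_{n+2},x_{n+3},x_{n+4}) := f_n(\mathbf{x}) - M_n n^2 x_{n+1} + M_n(n+1) S x_{n+1} - x_{n+2} - 2M_n n S x_{n+2} + 2M_n n(n+2) x_{n+1}x_{n+2} - 4 S x_{n+3} + 2x_{n+1}x_{n+3} + 2x_{n+2}x_{n+3} - 3x_{n+3} + (M_n(n-1)+4) S x_{n+4} + 6M_n n^2 x_{n+3}x_{n+4} - 5M_n n^2 x_{n+4}$. *)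

theory Defs
  imports Main
begin

definition cube :: "nat \<Rightarrow> (nat \<Rightarrow> int) set" where
  "cube n = {x. \<forall>i. (i \<in> {1..n} \<longrightarrow> x i \<in> {0,1}) \<and> (i \<notin> {1..n} \<longrightarrow> x i = 0)}"

text \<open>F k is the polynomial f_n with n = 4k+2 (it only reads x 1, ..., x n).\<close>
primrec F :: "nat \<Rightarrow> (nat \<Rightarrow> int) \<Rightarrow> int" where
  "F 0 = (\<lambda>x. x 1 + x 2)"
| "F (Suc k) =
    (let g = F k; n = 4 * k + 2;
         M = Max (g ` cube n) - Min (g ` cube n) + 1
     in (\<lambda>x. let S = (\<Sum>i=1..n. x i) in
           g x - M * int n ^ 2 * x (n+1) + M * (int n + 1) * S * x (n+1)
           - x (n+2) - 2 * M * int n * S * x (n+2)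
           + 2 * M * int n * (int n + 2) * x (n+1) * x (n+2)
           - 4 * S * x (n+3) + 2 * x (n+1) * x (n+3) + 2 * x (n+2) * x (n+3)
           - 3 * x (n+3) + (M * (int n - 1) + 4) * S * x (n+4)
           + 6 * M * int n ^ 2 * x (n+3) * x (n+4) - 5 * M * int n ^ 2 * x (n+4)))"

definition f :: "nat \<Rightarrow> (nat \<Rightarrow> int) \<Rightarrow> int" where
  "f n = F ((n - 2) div 4)"

end

theory Submission
  imports Defs
begin

lemma cube_finite: "finite (cube n)"
  unfolding cube_def by (rule finite_set_of_finite_funs) auto

lemma cube_ne: "(\<lambda>_. 0) \<in> cube n"
  unfolding cube_def by auto

lemma M_ge1:
  fixes g :: "(nat \<Rightarrow> int) \<Rightarrow> int"
  shows "Max (g ` cube n) - Min (g ` cube n) + 1 \<ge> 1"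
proof -
  have fin: "finite (g ` cube n)" using cube_finite by simp
  have ne: "g (\<lambda>_. 0) \<in> g ` cube n" using cube_ne by simp
  have "Min (g ` cube n) \<le> g (\<lambda>_. 0)" using Min_le[OF fin ne] .
  moreover have "g (\<lambda>_. 0) \<le> Max (g ` cube n)" using Max_ge[OF fin ne] .
  ultimately show ?thesis by linarith
qed

lemma F_local: "\<forall>y. (\<forall>i\<in>{1..4*k+2}. x i = y i) \<longrightarrow> F k x = F k y"
proof (induction k arbitrary: x)
  case 0
  then show ?case by simp
next
  case (Suc k)
  show ?case
  proof (intro allI impI)
    fix y assume h: "\<forall>i\<in>{1..4*Suc k+2}. x i = y i"
    have h1: "F k x = F k y" using Suc.IH h by auto
    have h2: "(\<Sum>i=1..4*k+2. x i) = (\<Sum>i=1..4*k+2. y i)"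
      by (rule sum.cong) (use h in auto)
    have h3: "x (4*k+2+j) = y (4*k+2+j)" if "j \<in> {1,2,3,4}" for j
      using h that by auto
    show "F (Suc k) x = F (Suc k) y"
      using h1 h2 h3[of 1] h3[of 2] h3[of 3] h3[of 4] by (simp add: Let_def)
  qed
qed

theorem mainTheorem7:
  fixes n :: nat and x :: "nat \<Rightarrow> int"
  assumes "n mod 4 = 2"
    and "\<forall>i\<in>{1..n+4}. x i \<in> {0,1}"
  shows "(x (n+2) = 0 \<and> x (n+3) = 0 \<and> x (n+4) = 0 \<longrightarrow>
           (f (n+4) (x(n+1 := 0)) < f (n+4) (x(n+1 := 1)) \<longleftrightarrow> (\<forall>i\<in>{1..n}. x i = 1)))
       \<and> (x (n+4) = 0 \<longrightarrow>
           (f (n+4) (x(n+3 := 0)) < f (n+4) (x(n+3 := 1)) \<longleftrightarrow>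
              x (n+1) = 1 \<and> x (n+2) = 1 \<and> (\<forall>i\<in>{1..n}. x i = 0)))
       \<and> (f (n+4) (x(n+4 := 0)) < f (n+4) (x(n+4 := 1)) \<longleftrightarrow> x (n+3) = 1)"
proof -
  define k where "k = (n - 2) div 4"
  have nk: "n = 4*k+2" using assms(1) unfolding k_def by presburger
  have fF: "f (n+4) = F (Suc k)" unfolding f_def nk by simp
  define M where "M = Max (F k ` cube n) - Min (F k ` cube n) + 1"
  have M1: "M \<ge> 1" unfolding M_def by (rule M_ge1)
  define S where "S = (\<Sum>i=1..n. x i)"
  define N where "N = int n"
  have N1: "N \<ge> 2" unfolding N_def nk by simp
  have xi: "x i \<in> {0,1}" if "i \<in> {1..n+4}" for i using assms(2) that by blast
  have S0: "S \<ge> 0" unfolding S_def by (rule sum_nonneg) (use xi in force)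
  have SN: "S \<le> N"
  proof -
    have "S \<le> (\<Sum>i=1..n. 1)" unfolding S_def by (rule sum_mono) (use xi in force)
    then show ?thesis unfolding N_def by simp
  qed
  have Sall1: "S = N \<longleftrightarrow> (\<forall>i\<in>{1..n}. x i = 1)"
  proof
    assume "S = N"
    hence "(\<Sum>i=1..n. 1 - x i) = 0" unfolding S_def N_def by (simp add: sum_subtractf)
    moreover have "\<forall>i\<in>{1..n}. 0 \<le> 1 - x i" using xi by force
    ultimately have "\<forall>i\<in>{1..n}. 1 - x i = 0" using sum_nonneg_eq_0_iff[of "{1..n}" "\<lambda>i. 1 - x i"] by simp
    thus "\<forall>i\<in>{1..n}. x i = 1" by auto
  next
    assume "\<forall>i\<in>{1..n}. x i = 1"
    thus "S = N" unfolding S_def N_def by simp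
  qed
  have Sall0: "S = 0 \<longleftrightarrow> (\<forall>i\<in>{1..n}. x i = 0)"
  proof
    assume "S = 0"
    moreover have "\<forall>i\<in>{1..n}. 0 \<le> x i" using xi by force
    ultimately show "\<forall>i\<in>{1..n}. x i = 0" unfolding S_def using sum_nonneg_eq_0_iff[of "{1..n}" x] by simp
  next
    assume "\<forall>i\<in>{1..n}. x i = 0"
    thus "S = 0" unfolding S_def by simp
  qed
  have expand: "F (Suc k) y = F k y - M * N ^ 2 * y (n+1) + M * (N + 1) * S * y (n+1)
           - y (n+2) - 2 * M * N * S * y (n+2)
           + 2 * M * N * (N + 2) * y (n+1) * y (n+2)
           - 4 * S * y (n+3) + 2 * y (n+1) * y (n+3) + 2 * y (n+2) * y (n+3)
           - 3 * y (n+3) + (M * (N - 1) + 4) * S * y (n+4)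
           + 6 * M * N ^ 2 * y (n+3) * y (n+4) - 5 * M * N ^ 2 * y (n+4)"
    if "\<forall>i\<in>{1..n}. y i = x i" for y
  proof -
    have "(\<Sum>i=1..n. y i) = S" unfolding S_def by (rule sum.cong) (use that in auto)
    then show ?thesis unfolding M_def N_def nk by (simp add: Let_def)
  qed
  have Fk: "F k (x(j := v)) = F k x" if "j > n" for j v
    using F_local[of k "x(j := v)"] that nk by auto
  have a: "x (n+1) \<in> {0,1}" "x (n+2) \<in> {0,1}" "x (n+3) \<in> {0,1}" "x (n+4) \<in> {0,1}"
    using xi by auto
  have e1: "f (n+4) (x(n+1 := 1)) - f (n+4) (x(n+1 := 0)) =
     M * ((N+1)*S - N^2) + 2*M*N*(N+2)*x (n+2) + 2 * x(n+3)"
    unfolding fF by (subst expand, simp, subst expand, simp, simp add: Fk algebra_simps)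
  have e2: "f (n+4) (x(n+3 := 1)) - f (n+4) (x(n+3 := 0)) =
     -4*S + 2*x(n+1) + 2*x(n+2) - 3 + 6*M*N^2*x(n+4)"
    unfolding fF by (subst expand, simp, subst expand, simp, simp add: Fk algebra_simps)
  have e3: "f (n+4) (x(n+4 := 1)) - f (n+4) (x(n+4 := 0)) =
     (M*(N-1)+4)*S + 6*M*N^2*x(n+3) - 5*M*N^2"
    unfolding fF by (subst expand, simp, subst expand, simp, simp add: Fk algebra_simps)
  have P1: "(x (n+2) = 0 \<and> x (n+3) = 0 \<and> x (n+4) = 0 \<longrightarrow>
           (f (n+4) (x(n+1 := 0)) < f (n+4) (x(n+1 := 1)) \<longleftrightarrow> (\<forall>i\<in>{1..n}. x i = 1)))"
  proof (intro impI)
    assume h: "x (n+2) = 0 \<and> x (n+3) = 0 \<and> x (n+4) = 0"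
    have "f (n+4) (x(n+1 := 0)) < f (n+4) (x(n+1 := 1)) \<longleftrightarrow> 0 < M * ((N+1)*S - N^2)"
      using e1 h by auto
    also have "\<dots> \<longleftrightarrow> 0 < (N+1)*S - N^2" using M1 by (simp add: zero_less_mult_iff)
    also have "\<dots> \<longleftrightarrow> S = N"
    proof
      assume "0 < (N+1)*S - N^2"
      show "S = N"
      proof (rule ccontr)
        assume "S \<noteq> N"
        hence "S \<le> N - 1" using SN by simp
        hence "(N+1)*S \<le> (N+1)*(N-1)" using N1 by (intro mult_left_mono) auto
        thus False using \<open>0 < (N+1)*S - N^2\<close> by (simp add: algebra_simps power2_eq_square)
      qed
    next
      assume "S = N" thus "0 < (N+1)*S - N^2" using N1 by (simp add: algebra_simps power2_eq_square)
    qed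
    finally show "f (n+4) (x(n+1 := 0)) < f (n+4) (x(n+1 := 1)) \<longleftrightarrow> (\<forall>i\<in>{1..n}. x i = 1)"
      using Sall1 by simp
  qed
  have P2: "(x (n+4) = 0 \<longrightarrow>
           (f (n+4) (x(n+3 := 0)) < f (n+4) (x(n+3 := 1)) \<longleftrightarrow>
              x (n+1) = 1 \<and> x (n+2) = 1 \<and> (\<forall>i\<in>{1..n}. x i = 0)))"
  proof (intro impI)
    assume h: "x (n+4) = 0"
    have "f (n+4) (x(n+3 := 0)) < f (n+4) (x(n+3 := 1)) \<longleftrightarrow> 0 < -4*S + 2*x(n+1) + 2*x(n+2) - 3"
      using e2 h by auto
    also have "\<dots> \<longleftrightarrow> x (n+1) = 1 \<and> x (n+2) = 1 \<and> S = 0"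
      using a S0 by auto
    finally show "f (n+4) (x(n+3 := 0)) < f (n+4) (x(n+3 := 1)) \<longleftrightarrow>
              x (n+1) = 1 \<and> x (n+2) = 1 \<and> (\<forall>i\<in>{1..n}. x i = 0)"
      using Sall0 by simp
  qed
  have P3: "f (n+4) (x(n+4 := 0)) < f (n+4) (x(n+4 := 1)) \<longleftrightarrow> x (n+3) = 1"
  proof -
    have A: "0 \<le> (M*(N-1)+4)*S" using M1 N1 S0 by simp
    have B: "(M*(N-1)+4)*S \<le> (M*(N-1)+4)*N" using M1 N1 SN by (intro mult_left_mono) auto
    have C: "M*N^2 \<ge> N^2" using M1 N1 by simp
    have D: "M*N \<ge> 0" using M1 N1 by simp
    have E: "N^2 \<ge> 2*N" using N1 by (simp add: power2_eq_square)
    show ?thesis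
    proof (cases "x (n+3) = 1")
      case True
      have "N^2 > 0" using N1 by simp
      hence G: "M*N^2 > 0" using M1 by simp
      have "(M*(N-1)+4)*S + 6*M*N^2*x(n+3) - 5*M*N^2 = (M*(N-1)+4)*S + M*N^2" using True by simp
      hence "(M*(N-1)+4)*S + 6*M*N^2*x(n+3) - 5*M*N^2 > 0" using A G by linarith
      then show ?thesis using e3 True by linarith
    next
      case False
      hence "x (n+3) = 0" using a by auto
      have "(M*(N-1)+4)*N = M*N^2 - M*N + 4*N" by (simp add: algebra_simps power2_eq_square)
      hence "(M*(N-1)+4)*S + 6*M*N^2*x(n+3) - 5*M*N^2 \<le> M*N^2 - M*N + 4*N - 5*M*N^2"
        using B \<open>x (n+3) = 0\<close> by simp
      hence "(M*(N-1)+4)*S + 6*M*N^2*x(n+3) - 5*M*N^2 < 0" using C D E N1 by linarith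
      then show ?thesis using e3 False by linarith
    qed
  qed
  show ?thesis using P1 P2 P3 by blast
qed

end
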